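(* For every price $p>0$ and every ordering $\pi$ of $[n]$, \[ \mathbb{E}_{\mathbf v\sim\mathcal F}[\mathrm{Rev}(\mathbf v,p,\pi)]\ \ge\ p\Big(1-\prod_{i\in[n]}\big(1-\mathbb{E}_{v_i\sim\mathcal F_i}[y^*_i(v_i,p)]\big)\Big). \]
   Context: There are $n$ agents $[n]$ and one divisible item of size $1$. Each agent $i$ has a non-decreasing concave valuation $v_i:[0,1]\to\mathbb{R}_{\ge0}$ drawn independently from a known distribution $\mathcal F_i$; $\mathbf v\sim\mathcal F=\mathcal F_1\times\cdots\times\mathcal F_n$. For a price $p>0$, $y^*_i(v_i,p)\in[0,1]$ is a maximizer of $z\mapsto v_i(z)-pz$ over $[0,1]$ (fixed measurable selection). For an ordering $\pi$, with $B_\pi(i)$ the agents acting before $i$, agent $i$ buys $y_i(\mathbf v,p,\pi)=\min\{y^*_i(v_i,p),\max\{0,1-\sum_{j\in B_\pi(i)}y^*_j(v_j,p)\}\}$ in sequential posted pricing at price $p$ per unit, and $\mathrm{Rev}(\mathbf v,p,\pi)=p\sum_i y_i(\mathbf v,p,\pi)$. *)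

theory Defs
  imports "HOL-Probability.Probability"
begin

type_synonym valuation = "real \<Rightarrow> real"

definition admissible_val :: "valuation \<Rightarrow> bool" where
  "admissible_val v \<longleftrightarrow> mono_on {0..1} v \<and> concave_on {0..1} v \<and> (\<forall>z\<in>{0..1}. 0 \<le> v z)"

definition is_demand :: "valuation \<Rightarrow> real \<Rightarrow> real \<Rightarrow> bool" where
  "is_demand v p y \<longleftrightarrow> y \<in> {0..1} \<and> (\<forall>z\<in>{0..1}. v z - p * z \<le> v y - p * y)"

text \<open>An ordering of the agents {..<n}: pi i is the position of agent i (a bijection).
  The agents acting before i are those with smaller position.\<close>
definition before :: "nat \<Rightarrow> (nat \<Rightarrow> nat) \<Rightarrow> nat \<Rightarrow> nat set" where
  "before n \<pi> i = {j \<in> {..<n}. \<pi> j < \<pi> i}"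

text \<open>ystar i v p : the fixed selection of agent i's demand at price p.\<close>
definition alloc ::
  "nat \<Rightarrow> (nat \<Rightarrow> valuation \<Rightarrow> real \<Rightarrow> real) \<Rightarrow> (nat \<Rightarrow> valuation) \<Rightarrow> real \<Rightarrow> (nat \<Rightarrow> nat) \<Rightarrow> nat \<Rightarrow> real" where
  "alloc n ystar v p \<pi> i =
     min (ystar i (v i) p) (max 0 (1 - (\<Sum>j\<in>before n \<pi> i. ystar j (v j) p)))"

definition Rev ::
  "nat \<Rightarrow> (nat \<Rightarrow> valuation \<Rightarrow> real \<Rightarrow> real) \<Rightarrow> (nat \<Rightarrow> valuation) \<Rightarrow> real \<Rightarrow> (nat \<Rightarrow> nat) \<Rightarrow> real" where
  "Rev n ystar v p \<pi> = p * (\<Sum>i<n. alloc n ystar v p \<pi> i)"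

end

theory Submission
  imports Defs
begin

lemma telescope:
  fixes w :: "nat \<Rightarrow> real"
  assumes "\<And>k. 0 \<le> w k"
  shows "(\<Sum>k<N. min (w k) (max 0 (1 - (\<Sum>m<k. w m)))) = min 1 (\<Sum>m<N. w m)"
proof (induction N)
  case 0 then show ?case by simp
next
  case (Suc N)
  have "0 \<le> w N" by (rule assms)
  then show ?case using Suc by (simp add: min_def max_def)
qed

lemma sum_alloc:
  fixes y :: "nat \<Rightarrow> real"
  assumes bij: "bij_betw \<pi> {..<n} {..<n}" and nn: "\<And>i. i < n \<Longrightarrow> 0 \<le> y i"
  shows "(\<Sum>i<n. min (y i) (max 0 (1 - (\<Sum>j\<in>before n \<pi> i. y j)))) = min 1 (\<Sum>i<n. y i)"
proof -
  define \<sigma> where "\<sigma> = the_inv_into {..<n} \<pi>"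
  have sbij: "bij_betw \<sigma> {..<n} {..<n}" unfolding \<sigma>_def by (rule bij_betw_the_inv_into[OF bij])
  have ps: "\<pi> (\<sigma> k) = k" if "k < n" for k
    unfolding \<sigma>_def using f_the_inv_into_f_bij_betw[OF bij] that by auto
  have sp: "\<sigma> (\<pi> i) = i" if "i < n" for i
    unfolding \<sigma>_def using the_inv_into_f_f[OF bij_betw_imp_inj_on[OF bij]] that by auto
  define w where "w k = y (\<sigma> k)" for k
  have wn: "0 \<le> w k" if "k < n" for k
    unfolding w_def using sbij that nn bij_betwE by blast
  have bef: "(\<Sum>j\<in>before n \<pi> i. y j) = (\<Sum>m<\<pi> i. w m)" if i: "i < n" for i
  proof -
    have pin: "\<pi> i < n" using bij i bij_betwE by blast
    have img: "\<pi> ` before n \<pi> i = {..<\<pi> i}"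
    proof
      show "\<pi> ` before n \<pi> i \<subseteq> {..<\<pi> i}" by (auto simp: before_def)
      show "{..<\<pi> i} \<subseteq> \<pi> ` before n \<pi> i"
      proof
        fix m assume m: "m \<in> {..<\<pi> i}"
        then have mn: "m < n" using pin by auto
        have "\<sigma> m < n" using sbij mn bij_betwE by blast
        then have "\<sigma> m \<in> before n \<pi> i" using ps[OF mn] m by (auto simp: before_def)
        then show "m \<in> \<pi> ` before n \<pi> i" using ps[OF mn] by (metis image_eqI)
      qed
    qed
    have inj: "inj_on \<pi> (before n \<pi> i)"
      using bij_betw_imp_inj_on[OF bij] by (rule inj_on_subset) (auto simp: before_def)
    have "(\<Sum>m<\<pi> i. w m) = (\<Sum>j\<in>before n \<pi> i. w (\<pi> j))"
      using sum.reindex[OF inj, of w] img by simp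
    also have "\<dots> = (\<Sum>j\<in>before n \<pi> i. y j)"
      by (rule sum.cong) (auto simp: w_def sp before_def)
    finally show ?thesis by simp
  qed
  define g where "g i = min (y i) (max 0 (1 - (\<Sum>m<\<pi> i. w m)))" for i
  have "(\<Sum>i<n. min (y i) (max 0 (1 - (\<Sum>j\<in>before n \<pi> i. y j)))) = (\<Sum>i<n. g i)"
    by (rule sum.cong) (auto simp: g_def bef)
  also have "\<dots> = (\<Sum>k<n. g (\<sigma> k))"
    using sum.reindex_bij_betw[OF sbij, of g] by simp
  also have "\<dots> = (\<Sum>k<n. min (w k) (max 0 (1 - (\<Sum>m<k. w m))))"
    by (rule sum.cong) (auto simp: g_def w_def ps)
  also have "\<dots> = min 1 (\<Sum>m<n. w m)"
  proof -
    define w' where "w' k = (if k < n then w k else 0)" for k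
    have "(\<Sum>k<n. min (w k) (max 0 (1 - (\<Sum>m<k. w m)))) = (\<Sum>k<n. min (w' k) (max 0 (1 - (\<Sum>m<k. w' m))))"
      by (rule sum.cong) (auto simp: w'_def)
    also have "\<dots> = min 1 (\<Sum>m<n. w' m)"
      by (rule telescope) (auto simp: w'_def wn)
    finally show ?thesis by (simp add: w'_def)
  qed
  also have "(\<Sum>m<n. w m) = (\<Sum>i<n. y i)"
    unfolding w_def using sum.reindex_bij_betw[OF sbij, of y] by simp
  finally show ?thesis .
qed

lemma prod_bound:
  fixes y :: "nat \<Rightarrow> real"
  assumes "finite I" "\<And>i. i \<in> I \<Longrightarrow> 0 \<le> y i \<and> y i \<le> 1"
  shows "1 - (\<Prod>i\<in>I. 1 - y i) \<le> min 1 (\<Sum>i\<in>I. y i)"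
proof -
  have "0 \<le> (\<Prod>i\<in>I. 1 - y i)" using assms by (intro prod_nonneg) auto
  moreover have "1 - (\<Prod>i\<in>I. 1 - y i) \<le> (\<Sum>i\<in>I. y i)"
    using assms
  proof (induction I rule: finite_induct)
    case empty then show ?case by simp
  next
    case (insert a F)
    have P0: "0 \<le> (\<Prod>i\<in>F. 1 - y i)" "(\<Prod>i\<in>F. 1 - y i) \<le> 1"
      using insert by (auto intro!: prod_nonneg prod_le_1)
    have ya: "0 \<le> y a" "y a \<le> 1" using insert by auto
    have IH: "1 - (\<Prod>i\<in>F. 1 - y i) \<le> (\<Sum>i\<in>F. y i)" using insert by auto
    have "y a * (\<Prod>i\<in>F. 1 - y i) \<le> y a" using ya P0 by (simp add: mult_left_le)
    then show ?case using insert IH by (simp add: algebra_simps)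
  qed
  ultimately show ?thesis by simp
qed

theorem mainTheorem7:
  fixes n :: nat
    and F :: "nat \<Rightarrow> valuation measure"
    and ystar :: "nat \<Rightarrow> valuation \<Rightarrow> real \<Rightarrow> real"
    and p :: real
    and \<pi> :: "nat \<Rightarrow> nat"
  assumes prob: "\<And>i. i < n \<Longrightarrow> prob_space (F i)"
    and adm: "\<And>i. i < n \<Longrightarrow> AE v in F i. admissible_val v"
    and sel: "\<And>i v q. i < n \<Longrightarrow> v \<in> space (F i) \<Longrightarrow> admissible_val v \<Longrightarrow> q > 0 \<Longrightarrow>
                 is_demand v q (ystar i v q)"
    and meas: "\<And>i q. i < n \<Longrightarrow> q > 0 \<Longrightarrow> (\<lambda>v. ystar i v q) \<in> borel_measurable (F i)"
    and p_pos: "p > 0"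
    and ord: "bij_betw \<pi> {..<n} {..<n}"
  shows "(\<integral>v. Rev n ystar v p \<pi> \<partial>(PiM {..<n} F))
           \<ge> p * (1 - (\<Prod>i<n. (1 - (\<integral>u. ystar i u p \<partial>(F i)))))"
proof -
  define y where "y i u = ystar i u p" for i u
  define F' where "F' i = (if i < n then F i else return (count_space UNIV) (\<lambda>_. 0))" for i
  have PiEq: "PiM {..<n} F = PiM {..<n} F'"
    by (rule PiM_cong) (auto simp: F'_def)
  have probF': "prob_space (F' i)" for i
    using prob by (auto simp: F'_def intro: prob_space_return)
  interpret P: product_prob_space F' "{..<n}"
    by (simp add: product_prob_space_def product_sigma_finite_def product_prob_space_axioms_def
        probF' prob_space_imp_sigma_finite)
  have ybound: "AE u in F i. 0 \<le> y i u \<and> y i u \<le> 1" if i: "i < n" for i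
    by (rule AE_mp[OF adm[OF i] AE_I2]) (use sel[OF i _ _ p_pos] in \<open>auto simp: is_demand_def y_def\<close>)
  have ymeas: "y i \<in> borel_measurable (F i)" if i: "i < n" for i
    using meas[OF i p_pos] unfolding y_def[abs_def] by simp
  have yint: "integrable (F i) (y i)" if i: "i < n" for i
  proof -
    interpret prob_space "F i" by (rule prob[OF i])
    show ?thesis
      by (rule integrable_const_bound[where B=1]) (use ybound[OF i] ymeas[OF i] in auto)
  qed
  have AEprod: "AE v in PiM {..<n} F'. \<forall>i\<in>{..<n}. 0 \<le> y i (v i) \<and> y i (v i) \<le> 1"
  proof (rule AE_finite_allI)
    fix i assume i: "i \<in> {..<n}"
    have "AE u in distr (PiM {..<n} F') (F' i) (\<lambda>\<omega>. \<omega> i). 0 \<le> y i u \<and> y i u \<le> 1"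
    proof -
      have Fi: "F' i = F i" using i by (simp add: F'_def)
      have D: "distr (PiM {..<n} F') (F i) (\<lambda>\<omega>. \<omega> i) = F i"
        using P.PiM_component[OF i] unfolding Fi .
      show ?thesis unfolding Fi D using ybound[of i] i by simp
    qed
    then show "AE v in PiM {..<n} F'. 0 \<le> y i (v i) \<and> y i (v i) \<le> 1"
      by (rule AE_distrD[OF measurable_component_singleton[OF i]])
  qed simp
  have cmeas: "(\<lambda>v. y j (v j)) \<in> borel_measurable (PiM {..<n} F')" if j: "j < n" for j
  proof -
    have Fj: "F' j = F j" using j by (simp add: F'_def)
    have "(\<lambda>v. v j) \<in> PiM {..<n} F' \<rightarrow>\<^sub>M F j"
      using measurable_component_singleton[of j "{..<n}" F'] j unfolding Fj by simp
    from measurable_compose[OF this ymeas[OF j]] show ?thesis .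
  qed
  have Rev_eq: "Rev n ystar v p \<pi> = p * min 1 (\<Sum>i<n. y i (v i))"
    if "\<forall>i\<in>{..<n}. 0 \<le> y i (v i) \<and> y i (v i) \<le> 1" for v
    unfolding Rev_def alloc_def y_def[symmetric]
    using sum_alloc[OF ord, of "\<lambda>i. y i (v i)"] that by simp
  have Rmeas: "(\<lambda>v. p * min 1 (\<Sum>i<n. y i (v i))) \<in> borel_measurable (PiM {..<n} F')"
    using cmeas by measurable
  have Revmeas: "(\<lambda>v. Rev n ystar v p \<pi>) \<in> borel_measurable (PiM {..<n} F')"
    unfolding Rev_def alloc_def y_def[symmetric]
    by (intro borel_measurable_times borel_measurable_const borel_measurable_sum borel_measurable_min
          borel_measurable_max borel_measurable_diff cmeas) (auto simp: before_def)
  have step1: "(\<integral>v. Rev n ystar v p \<pi> \<partial>(PiM {..<n} F')) = (\<integral>v. p * min 1 (\<Sum>i<n. y i (v i)) \<partial>(PiM {..<n} F'))"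
    by (rule integral_cong_AE[OF Revmeas Rmeas]) (use AEprod in \<open>rule eventually_mono\<close>, simp add: Rev_eq)
  have Rint: "integrable (PiM {..<n} F') (\<lambda>v. p * min 1 (\<Sum>i<n. y i (v i)))"
  proof (rule P.integrable_const_bound[where B=p])
    show "AE x in PiM {..<n} F'. norm (p * min 1 (\<Sum>i<n. y i (x i))) \<le> p"
      using AEprod
    proof (rule eventually_mono)
      fix x assume h: "\<forall>i\<in>{..<n}. 0 \<le> y i (x i) \<and> y i (x i) \<le> 1"
      have "0 \<le> (\<Sum>i<n. y i (x i))" using h by (intro sum_nonneg) auto
      then show "norm (p * min 1 (\<Sum>i<n. y i (x i))) \<le> p" using p_pos
        by (auto simp: abs_mult min_def)
    qed
  qed (rule Rmeas)
  have fint: "integrable (F' i) (\<lambda>u. 1 - y i u)" if "i \<in> {..<n}" for i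
  proof -
    interpret prob_space "F i" using prob that by auto
    have Fi: "F' i = F i" using that by (simp add: F'_def)
    show ?thesis unfolding Fi using yint that by (intro Bochner_Integration.integrable_diff integrable_const) auto
  qed
  have Pint: "integrable (PiM {..<n} F') (\<lambda>v. \<Prod>i\<in>{..<n}. 1 - y i (v i))"
    by (rule P.product_integrable_prod[OF _ fint]) auto
  have Pval: "(\<integral>v. (\<Prod>i\<in>{..<n}. 1 - y i (v i)) \<partial>(PiM {..<n} F')) = (\<Prod>i\<in>{..<n}. (\<integral>u. 1 - y i u \<partial>(F' i)))"
    by (rule P.product_integral_prod[OF _ fint]) auto
  have fval: "(\<integral>u. 1 - y i u \<partial>(F' i)) = 1 - (\<integral>u. ystar i u p \<partial>(F i))" if "i \<in> {..<n}" for i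
  proof -
    interpret prob_space "F i" using prob that by auto
    have yi: "integrable (F i) (\<lambda>u. ystar i u p)" using yint[of i] that unfolding y_def[abs_def] by simp
    show ?thesis using that
      by (simp add: F'_def y_def prob_space Bochner_Integration.integral_diff[OF integrable_const yi])
  qed
  have step2: "(\<integral>v. p * (1 - (\<Prod>i\<in>{..<n}. 1 - y i (v i))) \<partial>(PiM {..<n} F')) \<le> (\<integral>v. p * min 1 (\<Sum>i<n. y i (v i)) \<partial>(PiM {..<n} F'))"
  proof (rule integral_mono_AE[OF _ Rint])
    show "integrable (PiM {..<n} F') (\<lambda>v. p * (1 - (\<Prod>i\<in>{..<n}. 1 - y i (v i))))"
      using Pint by auto
    show "AE x in PiM {..<n} F'. p * (1 - (\<Prod>i\<in>{..<n}. 1 - y i (x i))) \<le> p * min 1 (\<Sum>i<n. y i (x i))"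
      using AEprod
    proof (rule eventually_mono)
      fix x assume h: "\<forall>i\<in>{..<n}. 0 \<le> y i (x i) \<and> y i (x i) \<le> 1"
      show "p * (1 - (\<Prod>i\<in>{..<n}. 1 - y i (x i))) \<le> p * min 1 (\<Sum>i<n. y i (x i))"
        using prod_bound[of "{..<n}" "\<lambda>i. y i (x i)"] h p_pos by (intro mult_left_mono) auto
    qed
  qed
  have step3: "(\<integral>v. p * (1 - (\<Prod>i\<in>{..<n}. 1 - y i (v i))) \<partial>(PiM {..<n} F')) = p * (1 - (\<Prod>i<n. (1 - (\<integral>u. ystar i u p \<partial>(F i)))))"
    using Pint Pval fval by (simp add: P.P.prob_space)
  show ?thesis unfolding PiEq using step1 step2 step3 by linarith
qed

end
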